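(* For all positive reals $a,b$, the function $s\mapsto \lambda_s(a,b)$ is monotone increasing on $\mathbb{R}$.
   Context: For $a,b>0$ with $a\neq b$ define $$\lambda_s(a,b)=\begin{cases}\dfrac{s-1}{s+1}\cdot\dfrac{a^{s+1}+b^{s+1}-2\left(\frac{a+b}{2}\right)^{s+1}}{a^s+b^s-2\left(\frac{a+b}{2}\right)^s}, & s\in\mathbb{R}\setminus\{-1,0,1\},\\[3mm] \dfrac{2\log\frac{a+b}{2}-\log a-\log b}{\frac{1}{2a}+\frac{1}{2b}-\frac{2}{a+b}}, & s=-1,\\[3mm] \dfrac{a\log a+b\log b-(a+b)\log\frac{a+b}{2}}{2\log\frac{a+b}{2}-\log a-\log b}, & s=0,\\[3mm] \dfrac{(b-a)^2}{4\left(a\log a+b\log b-(a+b)\log\frac{a+b}{2}\right)}, & s=1,\end{cases}$$ and $\lambda_s(a,a)=a$. (Equivalently $\lambda_s(a,b)=\bar f_{s+1}(a,b)/\bar f_s(a,b)$ where $\bar f(a,b)=f(a)+f(b)-2f(\frac{a+b}{2})$ and $f_s$ is the convex function with $f_s''(t)=t^{s-2}$ given by $f_s(t)=(t^s-st+s-1)/(s(s-1))$ for $s\ne0,1$, $f_0(t)=t-\log t-1$, $f_1(t)=t\log t-t+1$.) *)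

theory Defs
  imports Complex_Main
begin

definition lambda_mean :: "real \<Rightarrow> real \<Rightarrow> real \<Rightarrow> real" where
  "lambda_mean s a b =
    (if a = b then a
     else if s = -1 then
       (2 * ln ((a + b) / 2) - ln a - ln b) / (1 / (2 * a) + 1 / (2 * b) - 2 / (a + b))
     else if s = 0 then
       (a * ln a + b * ln b - (a + b) * ln ((a + b) / 2)) / (2 * ln ((a + b) / 2) - ln a - ln b)
     else if s = 1 then
       (b - a)^2 / (4 * (a * ln a + b * ln b - (a + b) * ln ((a + b) / 2)))
     else
       (s - 1) / (s + 1) *
       ((a powr (s + 1) + b powr (s + 1) - 2 * ((a + b) / 2) powr (s + 1)) /
        (a powr s + b powr s - 2 * ((a + b) / 2) powr s)))"

end

theory Submission
  imports Defs "HOL-Analysis.Analysis"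
begin

definition kk :: "real \<Rightarrow> real \<Rightarrow> real \<Rightarrow> real" where
  "kk a b t = min (t - a) (b - t)"

lemma ftc_real:
  fixes g g' :: "real \<Rightarrow> real"
  assumes "c \<le> d" "\<And>t. t \<in> {c..d} \<Longrightarrow> (g has_real_derivative g' t) (at t)"
  shows "(g' has_integral (g d - g c)) {c..d}"
  apply (rule fundamental_theorem_of_calculus[OF assms(1)])
  using assms(2) by (simp add: has_real_derivative_iff_has_vector_derivative has_vector_derivative_at_within)

lemma taylor_kernel:
  fixes f f' f'' :: "real \<Rightarrow> real"
  assumes ab: "a < b"
    and d1: "\<And>t. t \<in> {a..b} \<Longrightarrow> (f has_real_derivative f' t) (at t)"
    and d2: "\<And>t. t \<in> {a..b} \<Longrightarrow> (f' has_real_derivative f'' t) (at t)"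
  shows "((\<lambda>t. kk a b t * f'' t) has_integral (f a + f b - 2 * f ((a+b)/2))) {a..b}"
proof -
  define m where "m = (a+b)/2"
  have am: "a \<le> m" "m \<le> b" using ab by (auto simp: m_def)
  have 1: "((\<lambda>t. (t - a) * f'' t) has_integral
      (((m - a) * f' m - f m) - ((a - a) * f' a - f a))) {a..m}"
  proof (rule ftc_real[OF am(1)])
    fix t assume t: "t \<in> {a..m}"
    then have tt: "t \<in> {a..b}" using am by auto
    show "((\<lambda>t. (t - a) * f' t - f t) has_real_derivative (t - a) * f'' t) (at t)"
      using d1[OF tt] d2[OF tt] by (auto intro!: derivative_eq_intros)
  qed
  have 2: "((\<lambda>t. (b - t) * f'' t) has_integral
      (((b - b) * f' b + f b) - ((b - m) * f' m + f m))) {m..b}"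
  proof (rule ftc_real[OF am(2)])
    fix t assume t: "t \<in> {m..b}"
    then have tt: "t \<in> {a..b}" using am by auto
    show "((\<lambda>t. (b - t) * f' t + f t) has_real_derivative (b - t) * f'' t) (at t)"
      using d1[OF tt] d2[OF tt] by (auto intro!: derivative_eq_intros)
  qed
  have i1: "((\<lambda>t. kk a b t * f'' t) has_integral
      (((m - a) * f' m - f m) - ((a - a) * f' a - f a))) {a..m}"
    by (rule has_integral_eq[OF _ 1]) (auto simp: kk_def m_def)
  have i2: "((\<lambda>t. kk a b t * f'' t) has_integral
      (((b - b) * f' b + f b) - ((b - m) * f' m + f m))) {m..b}"
    by (rule has_integral_eq[OF _ 2]) (auto simp: kk_def m_def)
  have H: "((\<lambda>t. kk a b t * f'' t) has_integral
      ((((m - a) * f' m - f m) - ((a - a) * f' a - f a)) + (((b - b) * f' b + f b) - ((b - m) * f' m + f m)))) {a..b}"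
    by (rule has_integral_combine[OF am i1 i2])
  have E1: "(((m - a) * f' m - f m) - ((a - a) * f' a - f a)) + (((b - b) * f' b + f b) - ((b - m) * f' m + f m))
     = f a + f b - 2 * f m + (2 * m - a - b) * f' m" by (simp add: algebra_simps)
  have "2 * m - a - b = 0" unfolding m_def by (simp add: field_simps)
  then have "(2 * m - a - b) * f' m = 0" by simp
  with E1 have V: "(((m - a) * f' m - f m) - ((a - a) * f' a - f a)) + (((b - b) * f' b + f b) - ((b - m) * f' m + f m))
     = f a + f b - 2 * f m" by linarith
  have "((\<lambda>t. kk a b t * f'' t) has_integral (f a + f b - 2 * f m)) {a..b}"
    using H V by metis
  then show ?thesis by (simp add: m_def)
qed


definition Fb :: "real \<Rightarrow> real \<Rightarrow> real \<Rightarrow> real" where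
  "Fb a b s = (if s = 0 then 2 * ln ((a+b)/2) - ln a - ln b
     else if s = 1 then a * ln a + b * ln b - (a+b) * ln ((a+b)/2)
     else (a powr s + b powr s - 2 * ((a+b)/2) powr s) / (s * (s - 1)))"

lemma Fb_int:
  assumes "0 < a" "a < b"
  shows "((\<lambda>t. kk a b t * t powr (s - 2)) has_integral Fb a b s) {a..b}"
proof -
  have pos: "\<And>t. t \<in> {a..b} \<Longrightarrow> t > 0" using assms by auto
  have m: "(a+b)/2 > 0" using assms by auto
  consider "s = 0" | "s = 1" | "s \<noteq> 0" "s \<noteq> 1" by blast
  then show ?thesis
  proof cases
    case 1
    have "((\<lambda>t. kk a b t * t powr (s - 2)) has_integral
       ((\<lambda>t. t - ln t - 1) a + (\<lambda>t. t - ln t - 1) b - 2 * (\<lambda>t. t - ln t - 1) ((a+b)/2))) {a..b}"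
    proof (rule taylor_kernel[OF assms(2)])
      fix t assume t: "t \<in> {a..b}"
      with pos have tp: "t > 0" by auto
      show "((\<lambda>t. t - ln t - 1) has_real_derivative (1 - 1 / t)) (at t)"
        using tp by (auto intro!: derivative_eq_intros simp: field_simps)
      show "((\<lambda>t. 1 - 1 / t) has_real_derivative t powr (s - 2)) (at t)"
        using tp 1 by (auto intro!: derivative_eq_intros simp: field_simps powr_minus_divide powr_realpow power2_eq_square)
    qed
    moreover have "(\<lambda>t. t - ln t - 1) a + (\<lambda>t. t - ln t - 1) b - 2 * (\<lambda>t. t - ln t - 1) ((a+b)/2) = Fb a b s"
      using 1 by (simp add: Fb_def field_simps)
    ultimately show ?thesis by simp
  next
    case 2
    have "((\<lambda>t. kk a b t * t powr (s - 2)) has_integral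
       ((\<lambda>t. t * ln t - t + 1) a + (\<lambda>t. t * ln t - t + 1) b - 2 * (\<lambda>t. t * ln t - t + 1) ((a+b)/2))) {a..b}"
    proof (rule taylor_kernel[OF assms(2)])
      fix t assume t: "t \<in> {a..b}"
      with pos have tp: "t > 0" by auto
      show "((\<lambda>t. t * ln t - t + 1) has_real_derivative (ln t)) (at t)"
        using tp by (auto intro!: derivative_eq_intros simp: field_simps)
      show "((\<lambda>t. ln t) has_real_derivative t powr (s - 2)) (at t)"
        using tp 2 by (auto intro!: derivative_eq_intros simp: field_simps powr_minus_divide)
    qed
    moreover have "(\<lambda>t. t * ln t - t + 1) a + (\<lambda>t. t * ln t - t + 1) b - 2 * (\<lambda>t. t * ln t - t + 1) ((a+b)/2) = Fb a b s"
      using 2 by (simp add: Fb_def field_simps)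
    ultimately show ?thesis by simp
  next
    case 3
    let ?f = "\<lambda>t. (t powr s - s * t + s - 1) / (s * (s - 1))"
    have "((\<lambda>t. kk a b t * t powr (s - 2)) has_integral
       (?f a + ?f b - 2 * ?f ((a+b)/2))) {a..b}"
    proof (rule taylor_kernel[OF assms(2)])
      fix t assume t: "t \<in> {a..b}"
      with pos have tp: "t > 0" by auto
      have "(?f has_real_derivative ((s * t powr (s - 1) - s) / (s * (s - 1)))) (at t)"
        using tp 3 by (auto intro!: derivative_eq_intros)
      moreover have "(s * t powr (s - 1) - s) / (s * (s - 1)) = (t powr (s - 1) - 1) / (s - 1)"
      proof -
        have "s * t powr (s - 1) - s = s * (t powr (s - 1) - 1)" by (simp add: algebra_simps)
        then show ?thesis using 3 by simp
      qed
      ultimately show "(?f has_real_derivative ((t powr (s - 1) - 1) / (s - 1))) (at t)"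
        by simp
      have "s - 1 \<noteq> 0" "s - 1 - 1 = s - 2" using 3 by auto
      then show "((\<lambda>t. (t powr (s - 1) - 1) / (s - 1)) has_real_derivative t powr (s - 2)) (at t)"
        using tp by (auto intro!: derivative_eq_intros)
    qed
    moreover have "?f a + ?f b - 2 * ?f ((a+b)/2) = Fb a b s"
    proof -
      have D: "s * (s - 1) \<noteq> 0" using 3 by simp
      have gen: "\<And>x y z. x / (s * (s - 1)) + y / (s * (s - 1)) - 2 * (z / (s * (s - 1)))
                 = (x + y - 2 * z) / (s * (s - 1))"
        by (simp add: diff_divide_distrib add_divide_distrib)
      have num: "(a powr s - s * a + s - 1) + (b powr s - s * b + s - 1) - 2 * (((a+b)/2) powr s - s * ((a+b)/2) + s - 1)
          = a powr s + b powr s - 2 * ((a+b)/2) powr s"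
        by (simp add: algebra_simps)
      show ?thesis using 3 by (simp only: gen num Fb_def if_False)
    qed
    ultimately show ?thesis by simp
  qed
qed

lemma Fb_pos:
  assumes "0 < a" "a < b"
  shows "Fb a b s > 0"
proof -
  define c where "c = min (a powr (s - 2)) (b powr (s - 2))"
  have cpos: "c > 0" using assms by (simp add: c_def)
  have kpos: "\<And>t. t \<in> {a..b} \<Longrightarrow> kk a b t \<ge> 0" by (auto simp: kk_def)
  have I2: "((\<lambda>t. kk a b t * t powr (2 - 2)) has_integral Fb a b 2) {a..b}"
    by (rule Fb_int[OF assms])
  have I2': "((\<lambda>t. kk a b t) has_integral Fb a b 2) {a..b}"
    by (rule has_integral_eq[OF _ I2]) (use assms in auto)
  have F2: "Fb a b 2 = (b - a)^2 / 4"
    using assms by (simp add: Fb_def power2_eq_square field_simps)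
  have Ic: "((\<lambda>t. c * kk a b t) has_integral c * Fb a b 2) {a..b}"
    by (rule has_integral_mult_right[OF I2'])
  have le: "c * kk a b t \<le> kk a b t * t powr (s - 2)" if t: "t \<in> {a..b}" for t
  proof -
    have tp: "t > 0" using t assms by auto
    have "c \<le> t powr (s - 2)"
    proof (cases "s - 2 \<ge> 0")
      case True
      then have "a powr (s - 2) \<le> t powr (s - 2)" using t assms by (intro powr_mono2) auto
      then show ?thesis by (simp add: c_def)
    next
      case False
      then have "b powr (s - 2) \<le> t powr (s - 2)" using t tp by (intro powr_mono2') auto
      then show ?thesis by (simp add: c_def)
    qed
    then show ?thesis using mult_right_mono[of c "t powr (s-2)" "kk a b t"] kpos[OF t]
      by (simp add: mult.commute)
  qed
  have "c * Fb a b 2 \<le> Fb a b s"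
    by (rule has_integral_le[OF Ic Fb_int[OF assms] le])
  moreover have "(b - a)^2 > 0" using assms by simp
  then have "c * Fb a b 2 > 0" using cpos unfolding F2 by simp
  ultimately show ?thesis by linarith
qed

lemma aux_div: "(s::real) \<noteq> 0 \<Longrightarrow>
  (x / ((s + 1) * (s + 1 - 1))) / (y / (s * (s - 1))) = (s - 1) / (s + 1) * (x / y)"
proof -
  assume h: "(s::real) \<noteq> 0"
  have "(x / ((s + 1) * (s + 1 - 1))) / (y / (s * (s - 1))) = (s * ((s-1) * x)) / (s * ((s+1) * y))"
    by (simp add: ac_simps)
  also have "\<dots> = ((s-1) * x) / ((s+1) * y)" using h by simp
  also have "\<dots> = (s - 1) / (s + 1) * (x / y)" by simp
  finally show ?thesis .
qed

lemma lam_eq: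
  assumes "0 < a" "a < b"
  shows "lambda_mean s a b = Fb a b (s + 1) / Fb a b s"
proof -
  have ne: "a \<noteq> b" using assms by simp
  have b0: "b > 0" using assms by simp
  have m0: "(a + b) / 2 > 0" using assms by simp
  consider "s = -1" | "s = 0" | "s = 1" | "s \<noteq> -1" "s \<noteq> 0" "s \<noteq> 1" by blast
  then show ?thesis
  proof cases
    case 1
    then show ?thesis using assms b0 m0
      by (simp add: lambda_mean_def Fb_def powr_neg_one field_simps)
  next
    case 2
    then show ?thesis using ne by (simp add: lambda_mean_def Fb_def)
  next
    case 3
    have F2: "Fb a b 2 = (b - a)^2 / 4"
      using assms by (simp add: Fb_def power2_eq_square field_simps)
    define E where "E = a * ln a + b * ln b - (a + b) * ln ((a + b) / 2)"
    have L: "lambda_mean s a b = (b - a)^2 / (4 * E)" using 3 ne by (simp add: lambda_mean_def E_def)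
    have R1: "Fb a b (s + 1) = (b - a)^2 / 4" using 3 F2 by simp
    have R2: "Fb a b s = E" using 3 by (simp add: Fb_def E_def)
    show ?thesis unfolding L R1 R2 by (simp add: divide_divide_eq_left)
  next
    case 4
    have s1: "s + 1 \<noteq> 0" "s + 1 \<noteq> 1" "s - 1 \<noteq> 0" using 4 by auto
    define x where "x = a powr (s + 1) + b powr (s + 1) - 2 * ((a + b) / 2) powr (s + 1)"
    define y where "y = a powr s + b powr s - 2 * ((a + b) / 2) powr s"
    have L: "lambda_mean s a b = (s - 1) / (s + 1) * (x / y)"
      using 4 ne by (simp add: lambda_mean_def x_def y_def)
    have R: "Fb a b (s + 1) / Fb a b s = (x / ((s + 1) * (s + 1 - 1))) / (y / (s * (s - 1)))"
      using 4 s1 by (simp add: Fb_def x_def y_def)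
    show ?thesis unfolding L R using aux_div[of s x y] 4 by simp
  qed
qed

lemma cheb:
  assumes "0 < a" "a < b" "s \<le> r"
  shows "Fb a b (s + 1) / Fb a b s \<le> Fb a b (r + 1) / Fb a b r"
proof -
  define d where "d = r - s"
  define \<mu> where "\<mu> = Fb a b (s + 1) / Fb a b s"
  have d0: "d \<ge> 0" using assms by (simp add: d_def)
  have Fs: "Fb a b s > 0" and Fs1: "Fb a b (s+1) > 0" and Fr: "Fb a b r > 0"
    using Fb_pos[OF assms(1,2)] by auto
  have mu0: "\<mu> > 0" using Fs Fs1 by (simp add: \<mu>_def)
  have I1: "Fb a b (s + 1) = \<mu> * Fb a b s" using Fs by (simp add: \<mu>_def)
  define g where "g = (\<lambda>x t. kk a b t * t powr (x - 2))"
  have G: "\<And>x. (g x has_integral Fb a b x) {a..b}"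
    unfolding g_def by (rule Fb_int[OF assms(1,2)])
  have comb: "((\<lambda>t. g (r + 1) t - \<mu> * g r t - \<mu> powr d * g (s + 1) t + \<mu> powr (d + 1) * g s t) has_integral
     (Fb a b (r + 1) - \<mu> * Fb a b r - \<mu> powr d * Fb a b (s + 1) + \<mu> powr (d + 1) * Fb a b s)) {a..b}"
    by (intro has_integral_add has_integral_diff has_integral_mult_right G)
  have pw: "\<And>t. t \<in> {a..b} \<Longrightarrow>
      g (r + 1) t - \<mu> * g r t - \<mu> powr d * g (s + 1) t + \<mu> powr (d + 1) * g s t
      = kk a b t * t powr (s - 2) * ((t - \<mu>) * (t powr d - \<mu> powr d))"
  proof -
    fix t assume t: "t \<in> {a..b}"
    then have tp: "t > 0" using assms by auto
    have e1: "t powr (r + 1 - 2) = t powr (s - 2) * t * t powr d"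
    proof -
      have X: "r + 1 - 2 = (s - 2) + 1 + d" by (simp add: d_def)
      show ?thesis unfolding X powr_add using tp by (simp add: powr_one)
    qed
    have e2: "t powr (r - 2) = t powr (s - 2) * t powr d"
    proof -
      have X: "r - 2 = (s - 2) + d" by (simp add: d_def)
      show ?thesis unfolding X powr_add ..
    qed
    have e3: "t powr (s + 1 - 2) = t powr (s - 2) * t"
    proof -
      have X: "s + 1 - 2 = (s - 2) + 1" by simp
      show ?thesis unfolding X powr_add using tp by (simp add: powr_one)
    qed
    have e4: "\<mu> powr (d + 1) = \<mu> powr d * \<mu>" using mu0 by (simp add: powr_add powr_one)
    show "g (r + 1) t - \<mu> * g r t - \<mu> powr d * g (s + 1) t + \<mu> powr (d + 1) * g s t
      = kk a b t * t powr (s - 2) * ((t - \<mu>) * (t powr d - \<mu> powr d))"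
      unfolding g_def e1 e2 e3 e4 by (simp add: algebra_simps)
  qed
  have nn: "\<And>t. t \<in> {a..b} \<Longrightarrow> 0 \<le> kk a b t * t powr (s - 2) * ((t - \<mu>) * (t powr d - \<mu> powr d))"
  proof -
    fix t assume t: "t \<in> {a..b}"
    then have tp: "t > 0" using assms by auto
    have k: "kk a b t \<ge> 0" using t by (auto simp: kk_def)
    have "(t - \<mu>) * (t powr d - \<mu> powr d) \<ge> 0"
    proof (cases "t \<le> \<mu>")
      case True
      then have "t powr d \<le> \<mu> powr d" using tp d0 by (intro powr_mono2) auto
      then show ?thesis using True by (simp add: mult_nonpos_nonpos)
    next
      case False
      then have "\<mu> powr d \<le> t powr d" using mu0 d0 by (intro powr_mono2) auto
      then show ?thesis using False by simp
    qed
    then show "0 \<le> kk a b t * t powr (s - 2) * ((t - \<mu>) * (t powr d - \<mu> powr d))"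
      using k by simp
  qed
  have "0 \<le> Fb a b (r + 1) - \<mu> * Fb a b r - \<mu> powr d * Fb a b (s + 1) + \<mu> powr (d + 1) * Fb a b s"
    by (rule has_integral_nonneg[OF has_integral_eq[OF _ comb]]) (use pw nn in auto)
  moreover have "\<mu> powr d * Fb a b (s + 1) = \<mu> powr (d + 1) * Fb a b s"
    unfolding I1 using mu0 by (simp add: powr_add powr_one)
  ultimately have "\<mu> * Fb a b r \<le> Fb a b (r + 1)" by linarith
  then show ?thesis using Fr by (simp add: \<mu>_def[symmetric] pos_le_divide_eq)
qed

lemma lam_sym: "lambda_mean s a b = lambda_mean s b a"
  by (simp add: lambda_mean_def add.commute power2_commute)

theorem theorem3:
  fixes a b :: real
  assumes "a > 0" and "b > 0"
  shows "mono (\<lambda>s. lambda_mean s a b)"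
proof (rule monoI)
  fix s r :: real assume sr: "s \<le> r"
  consider "a = b" | "a < b" | "b < a" by linarith
  then show "lambda_mean s a b \<le> lambda_mean r a b"
  proof cases
    case 1 then show ?thesis by (simp add: lambda_mean_def)
  next
    case 2 then show ?thesis using cheb[OF assms(1) 2 sr] by (simp add: lam_eq[OF assms(1) 2])
  next
    case 3 then show ?thesis using cheb[OF assms(2) 3 sr]
      by (simp add: lam_sym[of _ a b] lam_eq[OF assms(2) 3])
  qed
qed

end
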